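(* No randomized strategyproof mechanism for locating an obnoxious facility on $[0,1]$ has an approximation ratio better than $\sqrt{6/5}$ for the geometric mean of utilities.
   Context: Agents $i=1,\dots,n$ have private locations $x_i\in[0,1]$. A randomized mechanism $f$ maps each reported profile to a distribution over $[0,1]$; agent $i$'s utility from distribution $\pi$ is $\mathbb E_{y\sim\pi}|x_i-y|$, and $f$ is strategyproof if no agent can increase this expected utility by misreporting. The objective of $y$ is the geometric mean $\big(\prod_i|x_i-y|\big)^{1/n}$, and the mechanism's value is its expectation under $f(\mathbf x)$. The approximation ratio is the supremum over all numbers of agents and profiles of (optimal objective over deterministic $z\in[0,1]$)/(mechanism's value). *)

theory Defs
  imports "HOL-Probability.Probability"
begin

definition profile :: "real list \<Rightarrow> bool" where
  "profile xs \<longleftrightarrow> xs \<noteq> [] \<and> set xs \<subseteq> {0..1}"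

definition mechanism :: "(real list \<Rightarrow> real measure) \<Rightarrow> bool" where
  "mechanism f \<longleftrightarrow> (\<forall>xs. profile xs \<longrightarrow>
     prob_space (f xs) \<and> sets (f xs) = sets borel \<and> (AE y in f xs. y \<in> {0..1}))"

definition exp_utility :: "real measure \<Rightarrow> real \<Rightarrow> real" where
  "exp_utility P a = (\<integral>y. \<bar>a - y\<bar> \<partial>P)"

definition strategyproof :: "(real list \<Rightarrow> real measure) \<Rightarrow> bool" where
  "strategyproof f \<longleftrightarrow> (\<forall>xs i x'. profile xs \<longrightarrow> i < length xs \<longrightarrow> x' \<in> {0..1} \<longrightarrow>
     exp_utility (f (xs[i := x'])) (xs ! i) \<le> exp_utility (f xs) (xs ! i))"

definition geo_mean :: "real list \<Rightarrow> real \<Rightarrow> real" where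
  "geo_mean xs y = root (length xs) (\<Prod>a\<leftarrow>xs. \<bar>a - y\<bar>)"

definition opt :: "real list \<Rightarrow> real" where
  "opt xs = (SUP z\<in>{0..1}. geo_mean xs z)"

definition mech_value :: "(real list \<Rightarrow> real measure) \<Rightarrow> real list \<Rightarrow> real" where
  "mech_value f xs = (\<integral>y. geo_mean xs y \<partial>(f xs))"

text \<open>f achieves approximation ratio (at most) rho: OPT / value <= rho on every profile
  (written multiplicatively, so value 0 with OPT > 0 counts as infinite ratio).
  The approximation ratio of f is the infimum of all such rho.\<close>
definition achieves_ratio :: "(real list \<Rightarrow> real measure) \<Rightarrow> real \<Rightarrow> bool" where
  "achieves_ratio f \<rho> \<longleftrightarrow> (\<forall>xs. profile xs \<longrightarrow> opt xs \<le> \<rho> * mech_value f xs)"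

end

theory Submission
  imports Defs
begin

lemma gm2: "geo_mean [a,b] y = sqrt (\<bar>a-y\<bar>*\<bar>b-y\<bar>)"
  by (simp add: geo_mean_def sqrt_def numeral_2_eq_2)

lemma polyB:
  fixes y :: real assumes "0 \<le> y" "y \<le> 1"
  shows "(121/4) * (\<bar>0-y\<bar>*\<bar>3/4-y\<bar>) \<le> (2 + \<bar>1/4 - y\<bar>)^2"
proof -
  consider "y \<le> 1/4" | "1/4 \<le> y" "y \<le> 3/4" | "3/4 \<le> y" by linarith
  then show ?thesis
  proof cases
    case 1
    have h: "0 \<le> (y-1/4)^2" by simp
    have "(2 + \<bar>1/4 - y\<bar>)^2 - (121/4) * (\<bar>0-y\<bar>*\<bar>3/4-y\<bar>)
        = (125/4)*(y-1/4)^2 - (185/16)*y + 199/64"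
      using 1 assms by (simp add: abs_if power2_eq_square field_simps)
    then show ?thesis using h 1 by linarith
  next
    case 2
    have h: "0 \<le> (y-307/1000)^2" by simp
    have "(2 + \<bar>1/4 - y\<bar>)^2 - (121/4) * (\<bar>0-y\<bar>*\<bar>3/4-y\<bar>)
        = (125/4)*(y-307/1000)^2 + 3751/32000"
      using 2 assms by (simp add: abs_if power2_eq_square algebra_simps)
    then show ?thesis using h 2 by linarith
  next
    case 3
    have h: "0 \<le> (y-3/4)*(1-y)" using 3 assms by simp
    have "(2 + \<bar>1/4 - y\<bar>)^2 - (121/4) * (\<bar>0-y\<bar>*\<bar>3/4-y\<bar>)
        = (117/4)*((y-3/4)*(1-y)) + 25*(1-y)"
      using 3 assms by (simp add: abs_of_nonneg abs_of_nonpos power2_eq_square field_simps)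
    moreover have "0 \<le> (117/4)*((y-3/4)*(1-y)) + 25*(1-y)"
      using h assms by simp
    ultimately show ?thesis by simp
  qed
qed

lemma ptB:
  fixes y :: real assumes "y \<in> {0..1}"
  shows "(11/2) * geo_mean [0,3/4] y \<le> 2 + \<bar>1/4 - y\<bar>"
proof -
  have q: "(121/4) * (\<bar>0-y\<bar>*\<bar>3/4-y\<bar>) \<le> (2 + \<bar>1/4 - y\<bar>)^2"
    using assms polyB by auto
  have "sqrt (\<bar>0-y\<bar>*\<bar>3/4-y\<bar>) \<le> sqrt (((2/11)*(2 + \<bar>1/4 - y\<bar>))^2)"
  proof (rule real_sqrt_le_mono)
    have sq: "((2/11)*X)^2 = (4/121) * X^2" for X :: real
      by (simp add: power2_eq_square algebra_simps)
    have "((2/11)*(2 + \<bar>1/4 - y\<bar>))^2 = (4/121) * (2 + \<bar>1/4 - y\<bar>)^2"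
      by (rule sq)
    thus "\<bar>0-y\<bar>*\<bar>3/4-y\<bar> \<le> ((2/11)*(2 + \<bar>1/4 - y\<bar>))^2" using q by linarith
  qed
  also have "\<dots> = (2/11)*(2 + \<bar>1/4 - y\<bar>)" by simp
  finally have "sqrt (\<bar>0-y\<bar>*\<bar>3/4-y\<bar>) \<le> (2/11)*(2 + \<bar>1/4 - y\<bar>)" .
  thus ?thesis by (simp add: gm2)
qed

lemma ptC:
  fixes y :: real assumes "y \<in> {0..1}"
  shows "(11/2) * geo_mean [1/4,1] y \<le> 2 + \<bar>3/4 - y\<bar>"
proof -
  have "1 - y \<in> {0..1}" using assms by auto
  from ptB[OF this] have "(11/2) * geo_mean [0,3/4] (1-y) \<le> 2 + \<bar>1/4 - (1-y)\<bar>" .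
  moreover have "geo_mean [0,3/4] (1-y) = geo_mean [1/4,1] y"
  proof -
    have "\<bar>0-(1-y)\<bar> = \<bar>1-y\<bar>" "\<bar>3/4-(1-y)\<bar> = \<bar>1/4-y\<bar>" by arith+
    thus ?thesis by (simp add: gm2 mult.commute)
  qed
  moreover have "\<bar>1/4 - (1-y)\<bar> = \<bar>3/4 - y\<bar>" by (simp add: abs_if)
  ultimately show ?thesis by simp
qed

lemma gm_le1:
  fixes a b y :: real assumes "a \<in> {0..1}" "b \<in> {0..1}" "y \<in> {0..1}"
  shows "geo_mean [a,b] y \<le> 1"
proof -
  have "\<bar>a-y\<bar> \<le> 1" "\<bar>b-y\<bar> \<le> 1" using assms by auto
  hence "\<bar>a-y\<bar>*\<bar>b-y\<bar> \<le> 1" by (simp add: mult_le_one)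
  thus ?thesis by (simp add: gm2)
qed

lemma gm_nonneg: "0 \<le> geo_mean [a,b] y"
  by (simp add: gm2)

lemma opt_ge:
  fixes a b z :: real assumes "a \<in> {0..1}" "b \<in> {0..1}" "z \<in> {0..1}"
  shows "geo_mean [a,b] z \<le> opt [a,b]"
  unfolding opt_def
proof (rule cSUP_upper)
  show "z \<in> {0..1}" by fact
  show "bdd_above (geo_mean [a, b] ` {0..1})"
    by (rule bdd_aboveI[where M=1]) (use assms gm_le1 in auto)
qed

lemma meas_gm: "geo_mean [a,b] \<in> borel_measurable borel"
  unfolding gm2 by measurable

lemma integrable_mech:
  fixes g :: "real \<Rightarrow> real"
  assumes "mechanism f" "profile xs" "g \<in> borel_measurable borel"
    "\<And>y. y \<in> {0..1} \<Longrightarrow> \<bar>g y\<bar> \<le> B"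
  shows "integrable (f xs) g"
proof -
  have ps: "prob_space (f xs)" and s: "sets (f xs) = sets borel" and ae: "AE y in f xs. y \<in> {0..1}"
    using assms(1,2) unfolding mechanism_def by auto
  show ?thesis
  proof (rule finite_measure.integrable_const_bound[where B=B])
    show "finite_measure (f xs)" using ps by (simp add: prob_space_def)
    show "AE x in f xs. norm (g x) \<le> B" using ae assms(4) by (auto elim: AE_mp)
    show "g \<in> borel_measurable (f xs)" using assms(3) by (simp add: measurable_cong_sets[OF s refl])
  qed
qed

theorem theorem9:
  fixes f :: "real list \<Rightarrow> real measure" and \<rho> :: real
  assumes "mechanism f" and "strategyproof f" and "achieves_ratio f \<rho>"
  shows "\<rho> \<ge> sqrt (6/5)"
proof -
  define A where "A = [1/4, 3/4::real]"
  define B where "B = [0, 3/4::real]"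
  define C where "C = [1/4, 1::real]"
  have pA: "profile A" and pB: "profile B" and pC: "profile C"
    unfolding A_def B_def C_def profile_def by auto
  have psA: "prob_space (f A)" and aeA: "AE y in f A. y \<in> {0..1}"
    using assms(1) pA unfolding mechanism_def by auto
  have psB: "prob_space (f B)" and aeB: "AE y in f B. y \<in> {0..1}"
    using assms(1) pB unfolding mechanism_def by auto
  have psC: "prob_space (f C)" and aeC: "AE y in f C. y \<in> {0..1}"
    using assms(1) pC unfolding mechanism_def by auto
  have finA: "finite_measure (f A)" and finB: "finite_measure (f B)" and finC: "finite_measure (f C)"
    using psA psB psC by (simp_all add: prob_space_def)
  have mabs: "(\<lambda>y. \<bar>a - y\<bar>) \<in> borel_measurable borel" for a :: real by measurable
  have iabs: "integrable (f xs) (\<lambda>y. \<bar>a - y\<bar>)" if "profile xs" "a \<in> {0..1}" for xs a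
    by (rule integrable_mech[OF assms(1) that(1) mabs, where B=1]) (use that in auto)
  have igm: "integrable (f xs) (geo_mean [a,b])" if "profile xs" "a \<in> {0..1}" "b \<in> {0..1}" for xs a b
    by (rule integrable_mech[OF assms(1) that(1) meas_gm, where B=1])
       (use that gm_le1 gm_nonneg in auto)
  have sp1: "exp_utility (f B) (1/4) \<le> exp_utility (f A) (1/4)"
    using assms(2) pA unfolding strategyproof_def
    by (drule_tac x=A in spec, drule_tac x=0 in spec, drule_tac x=0 in spec) (simp add: A_def B_def)
  have sp2: "exp_utility (f C) (3/4) \<le> exp_utility (f A) (3/4)"
    using assms(2) pA unfolding strategyproof_def
    by (drule_tac x=A in spec, drule_tac x=1 in spec, drule_tac x=1 in spec) (simp add: A_def C_def)
  have sumA: "exp_utility (f A) (1/4) + exp_utility (f A) (3/4) \<le> 1"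
  proof -
    have "exp_utility (f A) (1/4) + exp_utility (f A) (3/4) = (\<integral>y. \<bar>1/4 - y\<bar> + \<bar>3/4 - y\<bar> \<partial>f A)"
      unfolding exp_utility_def
      using iabs[OF pA, of "1/4"] iabs[OF pA, of "3/4"] by (simp add: Bochner_Integration.integral_add)
    also have "\<dots> \<le> (\<integral>y. 1 \<partial>f A)"
      by (rule integral_mono_AE)
         (use iabs pA aeA finite_measure.integrable_const[OF finA] in \<open>auto intro!: Bochner_Integration.integrable_add elim!: AE_mp\<close>)
    also have "\<dots> = 1" using psA prob_space.prob_space by (simp add: prob_space.prob_space)
    finally show ?thesis .
  qed
  have vB: "(11/2) * mech_value f B - 2 \<le> exp_utility (f B) (1/4)"
  proof -
    have i: "integrable (f B) (geo_mean B)" using igm[OF pB] by (simp add: B_def)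
    have "(\<integral>y. (11/2) * geo_mean B y - 2 \<partial>f B) = (\<integral>y. (11/2) * geo_mean B y \<partial>f B) - (\<integral>y. 2 \<partial>f B)"
      by (rule Bochner_Integration.integral_diff) (use i finB finite_measure.integrable_const in auto)
    also have "\<dots> = (11/2) * mech_value f B - 2"
      by (simp add: mech_value_def prob_space.prob_space[OF psB])
    finally have "(11/2) * mech_value f B - 2 = (\<integral>y. (11/2) * geo_mean B y - 2 \<partial>f B)" by simp
    also have "\<dots> \<le> (\<integral>y. \<bar>1/4 - y\<bar> \<partial>f B)"
    proof (rule integral_mono_AE)
      show "integrable (f B) (\<lambda>y. (11/2) * geo_mean B y - 2)"
        by (rule Bochner_Integration.integrable_diff[OF integrable_mult_right[OF i] finite_measure.integrable_const[OF finB]])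
      show "integrable (f B) (\<lambda>y. \<bar>1/4 - y\<bar>)" by (rule iabs[OF pB]) simp
      show "AE y in f B. (11/2) * geo_mean B y - 2 \<le> \<bar>1/4 - y\<bar>"
        using aeB
      proof eventually_elim
        case (elim y)
        show ?case using ptB[OF elim] unfolding B_def by linarith
      qed
    qed
    finally show ?thesis unfolding exp_utility_def .
  qed
  have vC: "(11/2) * mech_value f C - 2 \<le> exp_utility (f C) (3/4)"
  proof -
    have i: "integrable (f C) (geo_mean C)" using igm[OF pC] by (simp add: C_def)
    have "(\<integral>y. (11/2) * geo_mean C y - 2 \<partial>f C) = (\<integral>y. (11/2) * geo_mean C y \<partial>f C) - (\<integral>y. 2 \<partial>f C)"
      by (rule Bochner_Integration.integral_diff) (use i finC finite_measure.integrable_const in auto)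
    also have "\<dots> = (11/2) * mech_value f C - 2"
      by (simp add: mech_value_def prob_space.prob_space[OF psC])
    finally have "(11/2) * mech_value f C - 2 = (\<integral>y. (11/2) * geo_mean C y - 2 \<partial>f C)" by simp
    also have "\<dots> \<le> (\<integral>y. \<bar>3/4 - y\<bar> \<partial>f C)"
    proof (rule integral_mono_AE)
      show "integrable (f C) (\<lambda>y. (11/2) * geo_mean C y - 2)"
        by (rule Bochner_Integration.integrable_diff[OF integrable_mult_right[OF i] finite_measure.integrable_const[OF finC]])
      show "integrable (f C) (\<lambda>y. \<bar>3/4 - y\<bar>)" by (rule iabs[OF pC]) simp
      show "AE y in f C. (11/2) * geo_mean C y - 2 \<le> \<bar>3/4 - y\<bar>"
        using aeC
      proof eventually_elim
        case (elim y)
        show ?case using ptC[OF elim] unfolding C_def by linarith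
      qed
    qed
    finally show ?thesis unfolding exp_utility_def .
  qed
  have oB: "1/2 \<le> opt B"
  proof -
    have "geo_mean [0, 3/4] 1 \<le> opt [0, 3/4]" by (rule opt_ge) auto
    moreover have "geo_mean [0, 3/4::real] 1 = 1/2" by (simp add: gm2 real_sqrt_divide)
    ultimately show ?thesis by (simp add: B_def)
  qed
  have oC: "1/2 \<le> opt C"
  proof -
    have "geo_mean [1/4, 1] 0 \<le> opt [1/4, 1]" by (rule opt_ge) auto
    moreover have "geo_mean [1/4, 1::real] 0 = 1/2" by (simp add: gm2 real_sqrt_divide)
    ultimately show ?thesis by (simp add: C_def)
  qed
  have rB: "opt B \<le> \<rho> * mech_value f B" and rC: "opt C \<le> \<rho> * mech_value f C"
    using assms(3) pB pC unfolding achieves_ratio_def by auto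
  have nB: "0 \<le> mech_value f B" and nC: "0 \<le> mech_value f C"
    unfolding mech_value_def B_def C_def by (auto intro!: integral_nonneg_AE simp: gm_nonneg)
  define V where "V = mech_value f B + mech_value f C"
  have V1: "V \<le> 10/11" using vB vC sp1 sp2 sumA unfolding V_def by linarith
  have V2: "1 \<le> \<rho> * V" using rB rC oB oC unfolding V_def by (simp add: distrib_left)
  have V0: "0 \<le> V" using nB nC unfolding V_def by simp
  have rpos: "0 < \<rho>"
  proof (rule ccontr)
    assume "\<not> 0 < \<rho>"
    hence "\<rho> * V \<le> 0" using V0 by (simp add: mult_nonpos_nonneg)
    thus False using V2 by simp
  qed
  have "\<rho> * V \<le> \<rho> * (10/11)" using V1 rpos by simp
  hence r: "11/10 \<le> \<rho>" using V2 by simp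
  have "sqrt (6/5) \<le> sqrt ((11/10)^2)" by (rule real_sqrt_le_mono) (simp add: power2_eq_square)
  also have "\<dots> = 11/10" by simp
  finally show ?thesis using r by simp
qed

end
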